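(* Let $G$ be a graph on $\{x_1,\dots,x_n\}$ such that the edge ideal $I=I(G)\subset S$ has linear quotients, and let $P\subset S$ be a monomial prime ideal (an ideal generated by a subset of the variables). Then $PI$ has linear quotients.
   Context: $S=K[x_1,\dots,x_n]$, $I(G)=(x_ix_j:\{x_i,x_j\}\in E(G))$. A monomial ideal $J$ has linear quotients if its minimal monomial generators can be ordered $u_1,\dots,u_s$ such that for each $i=2,\dots,s$ the colon ideal $(u_1,\dots,u_{i-1}):(u_i)$ is generated by variables. *)

theory Defs
  imports Main
begin

text \<open>Monomials of S = K[x_v : v in 'v] ('v a finite type of variables) are
  represented by their exponent vectors 'v => nat; the product of monomials is
  pointwise addition. A monomial ideal is represented by the set of monomials
  it contains (a monomial ideal is determined by, and K-spanned by, these).\<close>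

type_synonym 'v monomial = "'v \<Rightarrow> nat"

definition mvar :: "'v \<Rightarrow> 'v monomial" where
  "mvar v = (\<lambda>w. if w = v then 1 else 0)"

definition mmult :: "'v monomial \<Rightarrow> 'v monomial \<Rightarrow> 'v monomial" where
  "mmult u w = (\<lambda>v. u v + w v)"

definition mdvd :: "'v monomial \<Rightarrow> 'v monomial \<Rightarrow> bool" where
  "mdvd u m \<longleftrightarrow> (\<forall>v. u v \<le> m v)"

definition mideal :: "'v monomial set \<Rightarrow> 'v monomial set" where
  "mideal U = {m. \<exists>u\<in>U. mdvd u m}"

definition mingens :: "'v monomial set \<Rightarrow> 'v monomial set" where
  "mingens J = {m \<in> J. \<forall>m'\<in>J. mdvd m' m \<longrightarrow> m' = m}"

definition mcolon :: "'v monomial set \<Rightarrow> 'v monomial \<Rightarrow> 'v monomial set" where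
  "mcolon J u = {m. mmult m u \<in> J}"

definition mprod :: "'v monomial set \<Rightarrow> 'v monomial set \<Rightarrow> 'v monomial set" where
  "mprod J L = mideal {mmult a b | a b. a \<in> J \<and> b \<in> L}"

definition gen_by_vars :: "'v monomial set \<Rightarrow> bool" where
  "gen_by_vars J \<longleftrightarrow> (\<exists>A. J = mideal (mvar ` A))"

definition linear_quotients :: "'v monomial set \<Rightarrow> bool" where
  "linear_quotients J \<longleftrightarrow>
     (\<exists>us. distinct us \<and> set us = mingens J \<and>
        (\<forall>i. 0 < i \<and> i < length us \<longrightarrow>
             gen_by_vars (mcolon (mideal (set (take i us))) (us ! i))))"

definition edge_ideal :: "('v \<Rightarrow> 'v \<Rightarrow> bool) \<Rightarrow> 'v monomial set" where
  "edge_ideal E = mideal {mmult (mvar i) (mvar j) | i j. E i j}"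

end

theory Submission
  imports Defs
begin

definition mdeg :: "'v::finite monomial \<Rightarrow> nat" where
  "mdeg m = sum m UNIV"

lemma mdeg_mvar: "mdeg (mvar (i::'v::finite)) = 1"
  unfolding mdeg_def mvar_def by simp

lemma mdeg_mmult: "mdeg (mmult u (w::'v::finite monomial)) = mdeg u + mdeg w"
  unfolding mdeg_def mmult_def by (simp add: sum.distrib)

lemma mdvd_deg_eq:
  fixes u m :: "'v::finite monomial"
  assumes "mdvd u m" "mdeg u = mdeg m" shows "u = m"
proof (rule ccontr)
  assume "u \<noteq> m"
  then obtain v where "u v \<noteq> m v" by auto
  with assms(1) have "u v < m v" unfolding mdvd_def by (simp add: le_neq_implies_less)
  then have "sum u UNIV < sum m UNIV"
    using assms(1) unfolding mdvd_def by (intro sum_strict_mono_ex1) auto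
  with assms(2) show False unfolding mdeg_def by simp
qed

lemma mdvd_refl: "mdvd u u" unfolding mdvd_def by simp
lemma mdvd_trans: "mdvd u w \<Longrightarrow> mdvd w m \<Longrightarrow> mdvd u m"
  unfolding mdvd_def by (meson order_trans)

lemma mingens_mideal:
  assumes "\<And>g g'. g \<in> G \<Longrightarrow> g' \<in> G \<Longrightarrow> mdvd g g' \<Longrightarrow> g = g'"
  shows "mingens (mideal G) = G"
proof
  show "mingens (mideal G) \<subseteq> G"
  proof
    fix m assume "m \<in> mingens (mideal G)"
    then have m: "m \<in> mideal G" "\<And>m'. m' \<in> mideal G \<Longrightarrow> mdvd m' m \<Longrightarrow> m' = m"
      unfolding mingens_def by auto
    then obtain g where g: "g \<in> G" "mdvd g m" unfolding mideal_def by auto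
    then have "g \<in> mideal G" unfolding mideal_def using mdvd_refl by blast
    with m g show "m \<in> G" by metis
  qed
next
  show "G \<subseteq> mingens (mideal G)"
  proof
    fix g assume g: "g \<in> G"
    have "g \<in> mideal G" unfolding mideal_def using g mdvd_refl by blast
    moreover have "m' = g" if h: "m' \<in> mideal G" "mdvd m' g" for m'
    proof -
      obtain g'' where "g'' \<in> G" "mdvd g'' m'" using h(1) unfolding mideal_def by auto
      then have "g'' = g" using assms g h(2) mdvd_trans by metis
      then show ?thesis using \<open>mdvd g'' m'\<close> h(2) unfolding mdvd_def
        by (simp add: antisym ext)
    qed
    ultimately show "g \<in> mingens (mideal G)" unfolding mingens_def by auto
  qed
qed


lemma mideal_mono: "mdvd u m \<Longrightarrow> u \<in> mideal U \<Longrightarrow> m \<in> mideal U"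
  unfolding mideal_def using mdvd_trans by blast

lemma L1:
  fixes ws :: "'v monomial list"
  assumes "0 < i" "i < length ws"
    and H: "\<And>j. j < i \<Longrightarrow> \<exists>t. (ws!i) t < (ws!j) t \<and>
               (\<exists>u\<in>set (take i ws). mdvd u (mmult (mvar t) (ws!i)))"
  shows "gen_by_vars (mcolon (mideal (set (take i ws))) (ws ! i))"
proof -
  let ?g = "ws ! i" and ?U = "set (take i ws)"
  define V where "V = {t. mmult (mvar t) ?g \<in> mideal ?U}"
  have "mcolon (mideal ?U) ?g = mideal (mvar ` V)"
  proof
    show "mcolon (mideal ?U) ?g \<subseteq> mideal (mvar ` V)"
    proof
      fix m assume "m \<in> mcolon (mideal ?U) ?g"
      then obtain u where u: "u \<in> ?U" "mdvd u (mmult m ?g)"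
        unfolding mcolon_def mideal_def by auto
      then obtain j where j: "j < i" "u = ws ! j"
        using assms(2) by (auto simp: in_set_conv_nth)
      obtain t where t: "?g t < u t" "\<exists>u\<in>?U. mdvd u (mmult (mvar t) ?g)"
        using H[OF j(1)] j(2) by auto
      have "t \<in> V" using t(2) unfolding V_def mideal_def by auto
      moreover have "u t \<le> m t + ?g t" using u(2) unfolding mdvd_def mmult_def by auto
      then have "1 \<le> m t" using t(1) by linarith
      then have "mdvd (mvar t) m" unfolding mdvd_def mvar_def by auto
      ultimately show "m \<in> mideal (mvar ` V)" unfolding mideal_def by auto
    qed
  next
    show "mideal (mvar ` V) \<subseteq> mcolon (mideal ?U) ?g"
    proof
      fix m assume "m \<in> mideal (mvar ` V)"
      then obtain t where t: "t \<in> V" "mdvd (mvar t) m" unfolding mideal_def by auto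
      have "mdvd (mmult (mvar t) ?g) (mmult m ?g)"
        using t(2) unfolding mdvd_def mmult_def by auto
      then show "m \<in> mcolon (mideal ?U) ?g"
        using t(1) mideal_mono unfolding V_def mcolon_def by blast
    qed
  qed
  then show ?thesis unfolding gen_by_vars_def by blast
qed


lemma LQ':
  fixes us :: "'v monomial list"
  assumes "\<forall>i. 0 < i \<and> i < length us \<longrightarrow>
             gen_by_vars (mcolon (mideal (set (take i us))) (us ! i))"
    and "k < length us" "l < k"
  shows "\<exists>t. (us!k) t < (us!l) t \<and> (\<exists>l'<k. mdvd (us!l') (mmult (mvar t) (us!k)))"
proof -
  let ?U = "set (take k us)"
  obtain V where V: "mcolon (mideal ?U) (us!k) = mideal (mvar ` V)"
  proof -
    have "0 < k" using assms(3) by simp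
    then show ?thesis using that assms(1,2) unfolding gen_by_vars_def by blast
  qed
  define w where "w = (\<lambda>v. (us!l) v - (us!k) v)"
  have "us!l \<in> ?U" using assms(2,3) by (auto simp: in_set_conv_nth)
  moreover have "mdvd (us!l) (mmult w (us!k))" unfolding mdvd_def mmult_def w_def by auto
  ultimately have "w \<in> mcolon (mideal ?U) (us!k)"
    unfolding mcolon_def mideal_def by auto
  then obtain t where t: "t \<in> V" "mdvd (mvar t) w" using V unfolding mideal_def by auto
  have "1 \<le> w t" using t(2) unfolding mdvd_def mvar_def by (metis (full_types))
  then have lt: "(us!k) t < (us!l) t" unfolding w_def by simp
  have "mvar t \<in> mideal (mvar ` V)" using t(1) mdvd_refl unfolding mideal_def by blast
  then have "mmult (mvar t) (us!k) \<in> mideal ?U" using V unfolding mcolon_def by blast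
  then obtain u where u: "u \<in> ?U" "mdvd u (mmult (mvar t) (us!k))" unfolding mideal_def by auto
  then obtain l' where "l' < k" "u = us!l'" using assms(2) by (auto simp: in_set_conv_nth)
  with lt u show ?thesis by blast
qed


lemma mmult_comm: "mmult u w = mmult w u"
  unfolding mmult_def by (simp add: fun_eq_iff add.commute)

lemma comb:
  fixes a b c d p q t0 :: 'v and e' :: "'v monomial"
  defines "ek \<equiv> mmult (mvar p) (mvar q)" and "el \<equiv> mmult (mvar c) (mvar d)"
  assumes pq: "p \<noteq> q" and cd: "c \<noteq> d"
    and e': "mdvd e' (mmult (mvar t0) ek)" and t0: "ek t0 < el t0"
    and ne: "mmult (mvar a) ek \<noteq> mmult (mvar b) el"
  shows "\<exists>t. (mmult (mvar a) ek) t < (mmult (mvar b) el) t \<and>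
     (mdvd (mmult (mvar b) el) (mmult (mvar t) (mmult (mvar a) ek)) \<or>
      (\<exists>a'\<in>{a,b}. mdvd (mmult (mvar a') e') (mmult (mvar t) (mmult (mvar a) ek))))"
proof (cases "t0 = a")
  case False
  have "(mmult (mvar a) ek) t0 < (mmult (mvar b) el) t0"
    using t0 False by (simp add: mmult_def mvar_def)
  moreover have "mdvd (mmult (mvar a) e') (mmult (mvar t0) (mmult (mvar a) ek))"
    using e' by (simp add: mmult_def mvar_def mdvd_def)
  ultimately show ?thesis by blast
next
  case ta: True
  show ?thesis
  proof (cases "b = a")
    case True
    have "(mmult (mvar a) ek) a < (mmult (mvar b) el) a"
      using t0 ta True by (simp add: mmult_def mvar_def)
    moreover have "mdvd (mmult (mvar a) e') (mmult (mvar a) (mmult (mvar a) ek))"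
      using e' ta by (simp add: mmult_def mvar_def mdvd_def)
    ultimately show ?thesis by blast
  next
    case ba: False
    show ?thesis
    proof (cases "b = p \<or> b = q")
      case False
      have "(mmult (mvar a) ek) b < (mmult (mvar b) el) b"
        using ba False by (simp add: mmult_def mvar_def ek_def)
      moreover have "mdvd (mmult (mvar b) e') (mmult (mvar b) (mmult (mvar a) ek))"
        using e' ta by (simp add: mmult_def mvar_def mdvd_def)
      ultimately show ?thesis by blast
    next
      case bpq: True
      have acd: "a = c \<or> a = d" using t0 ta by (auto simp: el_def mmult_def mvar_def split: if_splits)
      obtain q' where q': "ek = mmult (mvar b) (mvar q')"
        using bpq unfolding ek_def using mmult_comm by metis
      obtain d' where d': "el = mmult (mvar a) (mvar d')" "d' \<noteq> a"
        using acd cd unfolding el_def using mmult_comm by metis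
      have "d' \<noteq> q'"
      proof
        assume "d' = q'"
        then have "mmult (mvar a) ek = mmult (mvar b) el"
          using q' d' by (auto simp: mmult_def fun_eq_iff)
        with ne show False by simp
      qed
      then have "(mmult (mvar a) ek) d' < (mmult (mvar b) el) d'"
        using q' d' by (simp add: mmult_def mvar_def)
      moreover have "mdvd (mmult (mvar b) el) (mmult (mvar d') (mmult (mvar a) ek))"
        using q' d' by (simp add: mmult_def mvar_def mdvd_def)
      ultimately show ?thesis by blast
    qed
  qed
qed


theorem lemma3p3:
  fixes E :: "'v::finite \<Rightarrow> 'v \<Rightarrow> bool" and A :: "'v set"
  assumes "\<And>i j. E i j \<Longrightarrow> E j i"
    and "\<And>i. \<not> E i i"
    and "linear_quotients (edge_ideal E)"
  shows "linear_quotients (mprod (mideal (mvar ` A)) (edge_ideal E))"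
proof -
  define G2 where "G2 = {mmult (mvar i) (mvar j) | i j. E i j}"
  obtain us where us: "distinct us" "set us = mingens (edge_ideal E)"
    and LQ: "\<forall>i. 0 < i \<and> i < length us \<longrightarrow>
             gen_by_vars (mcolon (mideal (set (take i us))) (us ! i))"
    using assms(3) unfolding linear_quotients_def by blast
  have deg2: "mdeg g = 2" if "g \<in> G2" for g
    using that unfolding G2_def by (auto simp: mdeg_mmult mdeg_mvar)
  have "mingens (edge_ideal E) = G2"
    unfolding edge_ideal_def G2_def[symmetric]
    by (rule mingens_mideal) (metis deg2 mdvd_deg_eq)
  with us have setus: "set us = G2" by simp
  define G3 where "G3 = {mmult (mvar a) e | a e. a \<in> A \<and> e \<in> set us}"
  have deg3: "mdeg g = 3" if "g \<in> G3" for g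
    using that deg2 unfolding G3_def setus by (auto simp: mdeg_mmult mdeg_mvar)
  have minG3: "mingens (mideal G3) = G3"
    by (rule mingens_mideal) (metis deg3 mdvd_deg_eq)
  have prodeq: "mprod (mideal (mvar ` A)) (edge_ideal E) = mideal G3"
  proof
    show "mprod (mideal (mvar ` A)) (edge_ideal E) \<subseteq> mideal G3"
    proof
      fix m assume "m \<in> mprod (mideal (mvar ` A)) (edge_ideal E)"
      then obtain x y where xy: "x \<in> mideal (mvar ` A)" "y \<in> edge_ideal E"
        "mdvd (mmult x y) m" unfolding mprod_def mideal_def by blast
      obtain a where a: "a \<in> A" "mdvd (mvar a) x" using xy(1) unfolding mideal_def by auto
      obtain e where e: "e \<in> G2" "mdvd e y" using xy(2)
        unfolding edge_ideal_def G2_def mideal_def by auto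
      have "mdvd (mmult (mvar a) e) (mmult x y)" using a(2) e(2)
        unfolding mdvd_def mmult_def by (simp add: add_mono)
      moreover have "mmult (mvar a) e \<in> G3" using a e unfolding G3_def setus by auto
      ultimately show "m \<in> mideal G3" using xy(3) mdvd_trans unfolding mideal_def by blast
    qed
  next
    show "mideal G3 \<subseteq> mprod (mideal (mvar ` A)) (edge_ideal E)"
    proof
      fix m assume "m \<in> mideal G3"
      then obtain a e where ae: "a \<in> A" "e \<in> G2" "mdvd (mmult (mvar a) e) m"
        unfolding mideal_def G3_def setus by auto
      have "mvar a \<in> mideal (mvar ` A)" using ae(1) mdvd_refl unfolding mideal_def by blast
      moreover have "e \<in> edge_ideal E" using ae(2) mdvd_refl
        unfolding edge_ideal_def G2_def mideal_def by blast
      ultimately show "m \<in> mprod (mideal (mvar ` A)) (edge_ideal E)"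
        using ae(3) unfolding mprod_def mideal_def by blast
    qed
  qed
  have "G3 = (\<lambda>(a,e). mmult (mvar a) e) ` (A \<times> set us)" unfolding G3_def by auto
  then have finG3: "finite G3" by simp
  define f where "f g = (LEAST k. \<exists>a\<in>A. k < length us \<and> g = mmult (mvar a) (us!k))" for g
  have fprop: "f g < length us \<and> (\<exists>a\<in>A. g = mmult (mvar a) (us!(f g)))" if gG3: "g \<in> G3" for g
  proof -
    obtain a e where "a \<in> A" "e \<in> set us" "g = mmult (mvar a) e" using gG3 unfolding G3_def by auto
    then obtain k where "\<exists>a\<in>A. k < length us \<and> g = mmult (mvar a) (us!k)"
      by (metis in_set_conv_nth)
    from LeastI[of "\<lambda>k. \<exists>a\<in>A. k < length us \<and> g = mmult (mvar a) (us!k)", OF this]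
    show ?thesis unfolding f_def by blast
  qed
  have fmin: "f g \<le> k" if "a \<in> A" "k < length us" "g = mmult (mvar a) (us!k)" for g a k
    unfolding f_def using that by (intro Least_le) blast
  obtain xs where xs: "set xs = G3" "distinct xs" using finite_distinct_list[OF finG3] by blast
  define ws where "ws = sort_key f xs"
  have ws: "set ws = G3" "distinct ws" "sorted (map f ws)" using xs unfolding ws_def by auto
  have fmono: "f (ws!j) \<le> f (ws!i)" if "j \<le> i" "i < length ws" for i j
    using sorted_nth_mono[OF ws(3), of j i] that by simp
  have early: "h \<in> set (take i ws)" if "h \<in> G3" "f h < f (ws!i)" "i < length ws" for h i
  proof -
    obtain p where p: "p < length ws" "h = ws!p" using \<open>h \<in> G3\<close> ws(1) by (metis in_set_conv_nth)
    have "p < i"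
    proof (rule ccontr)
      assume "\<not> p < i"
      then have "f (ws!i) \<le> f (ws!p)" using fmono p(1) by simp
      with \<open>f h < f (ws!i)\<close> p(2) show False by simp
    qed
    then show ?thesis using p by (auto simp: in_set_conv_nth)
  qed
  have main: "gen_by_vars (mcolon (mideal (set (take i ws))) (ws ! i))"
    if i: "0 < i" "i < length ws" for i
  proof (rule L1[OF i])
    fix j assume j: "j < i"
    let ?g = "ws!i" and ?g' = "ws!j"
    have gG: "?g \<in> G3" and g'G: "?g' \<in> G3" using i j ws(1) by auto
    have ne: "?g \<noteq> ?g'" using ws(2) i j by (simp add: nth_eq_iff_index_eq)
    have g'early: "?g' \<in> set (take i ws)" using j i by (auto simp: in_set_conv_nth)
    define k where "k = f ?g"
    define l where "l = f ?g'"
    have lk: "l \<le> k" unfolding k_def l_def using fmono j i by simp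
    obtain a where a: "a \<in> A" "?g = mmult (mvar a) (us!k)" "k < length us"
      using fprop[OF gG] unfolding k_def by blast
    obtain b where b: "b \<in> A" "?g' = mmult (mvar b) (us!l)" "l < length us"
      using fprop[OF g'G] unfolding l_def by blast
    show "\<exists>t. ?g t < ?g' t \<and> (\<exists>u\<in>set (take i ws). mdvd u (mmult (mvar t) ?g))"
    proof (cases "l = k")
      case True
      then have ab: "a \<noteq> b" using a b ne by auto
      have "?g b < ?g' b" using a b True ab by (simp add: mmult_def mvar_def)
      moreover have "mdvd ?g' (mmult (mvar b) ?g)" using a b True
        by (simp add: mmult_def mvar_def mdvd_def)
      ultimately show ?thesis using g'early by blast
    next
      case False
      then have "l < k" using lk by simp
      then obtain t0 l' where t0: "(us!k) t0 < (us!l) t0" "l' < k"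
        "mdvd (us!l') (mmult (mvar t0) (us!k))"
        using LQ'[OF LQ a(3)] by blast
      obtain p q where pq: "E p q" "us!k = mmult (mvar p) (mvar q)"
      proof -
        have "us!k \<in> G2" using a(3) setus nth_mem by metis
        then show ?thesis using that unfolding G2_def by blast
      qed
      obtain c d where cd: "E c d" "us!l = mmult (mvar c) (mvar d)"
      proof -
        have "us!l \<in> G2" using b(3) setus nth_mem by metis
        then show ?thesis using that unfolding G2_def by blast
      qed
      have "p \<noteq> q" "c \<noteq> d" using pq cd assms(2) by auto
      from comb[OF this, of "us!l'" t0 a b] t0 pq cd a b ne
      obtain t where t: "?g t < ?g' t"
        "mdvd ?g' (mmult (mvar t) ?g) \<or>
         (\<exists>a'\<in>{a,b}. mdvd (mmult (mvar a') (us!l')) (mmult (mvar t) ?g))"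
        by auto
      have "\<exists>u\<in>set (take i ws). mdvd u (mmult (mvar t) ?g)"
        using t(2)
      proof
        assume "mdvd ?g' (mmult (mvar t) ?g)"
        then show ?thesis using g'early by blast
      next
        assume "\<exists>a'\<in>{a,b}. mdvd (mmult (mvar a') (us!l')) (mmult (mvar t) ?g)"
        then obtain a' where a': "a' \<in> A" "mdvd (mmult (mvar a') (us!l')) (mmult (mvar t) ?g)"
          using a(1) b(1) by blast
        have l'len: "l' < length us" using t0(2) a(3) by simp
        have hG: "mmult (mvar a') (us!l') \<in> G3" using a'(1) l'len nth_mem unfolding G3_def by blast
        have "f (mmult (mvar a') (us!l')) < f ?g"
          using fmin[OF a'(1) l'len refl] t0(2) unfolding k_def by simp
        then show ?thesis using early[OF hG _ i(2)] a'(2) by blast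
      qed
      with t(1) show ?thesis by blast
    qed
  qed
  show ?thesis unfolding linear_quotients_def prodeq minG3
    using ws(1,2) main by blast
qed

end
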